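(* Let $\mathcal{C}\subseteq 2^{[n]}$ and $\mathcal{D}\subseteq 2^{[m]}$ be nonempty codes, and let $\mathcal{C}\times\mathcal{D}=\{c\cup(d+n)\mid c\in\mathcal{C},d\in\mathcal{D}\}\subseteq 2^{[n+m]}$, where $d+n=\{j+n\mid j\in d\}$. Then $\mathcal{C}$ and $\mathcal{D}$ are both convex if and only if $\mathcal{C}\times\mathcal{D}$ is convex, and in that case $\mathrm{mindim}(\mathcal{C}\times\mathcal{D})\le\mathrm{mindim}(\mathcal{C})+\mathrm{mindim}(\mathcal{D})$.
   Context: A code is a subset $\mathcal{C}\subseteq 2^{[n]}$. Given $U_1,\dots,U_n\subseteq X$, $\mathrm{code}(\mathcal{U},X)=\{\sigma\subseteq[n]\mid \bigcap_{i\in\sigma}U_i\setminus\bigcup_{j\notin\sigma}U_j\neq\emptyset\}$ with the empty intersection equal to $X$. A code is convex if it equals $\mathrm{code}(\mathcal{U},X)$ for some open convex $X\subseteq\mathbb{R}^d$ and convex open $U_i\subseteq X$; $\mathrm{mindim}$ is the least such $d$. *)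

theory Defs
  imports "HOL-Analysis.Analysis"
begin

text \<open>Points of R^d are modelled as functions nat => real vanishing from index d on;
  the topology is the library's Euclidean_space d.\<close>

definition convex_fun_set :: "(nat \<Rightarrow> real) set \<Rightarrow> bool" where
  "convex_fun_set S \<longleftrightarrow>
     (\<forall>x\<in>S. \<forall>y\<in>S. \<forall>t::real. 0 \<le> t \<and> t \<le> 1 \<longrightarrow> (\<lambda>i. (1 - t) * x i + t * y i) \<in> S)"

definition code_of :: "nat \<Rightarrow> (nat \<Rightarrow> 'a set) \<Rightarrow> 'a set \<Rightarrow> nat set set" where
  "code_of n U X = {\<sigma>. \<sigma> \<subseteq> {1..n} \<and>
      (X \<inter> (\<Inter>i\<in>\<sigma>. U i)) - (\<Union>j\<in>{1..n} - \<sigma>. U j) \<noteq> {}}"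

definition convex_realizable :: "nat \<Rightarrow> nat \<Rightarrow> nat set set \<Rightarrow> bool" where
  "convex_realizable d n C \<longleftrightarrow>
     (\<exists>X U. openin (Euclidean_space d) X \<and> convex_fun_set X \<and>
        (\<forall>i\<in>{1..n}. openin (Euclidean_space d) (U i) \<and> convex_fun_set (U i) \<and> U i \<subseteq> X) \<and>
        C = code_of n U X)"

definition convex_code :: "nat \<Rightarrow> nat set set \<Rightarrow> bool" where
  "convex_code n C \<longleftrightarrow> (\<exists>d. convex_realizable d n C)"

definition mindim :: "nat \<Rightarrow> nat set set \<Rightarrow> nat" where
  "mindim n C = (LEAST d. convex_realizable d n C)"

definition code_prod :: "nat \<Rightarrow> nat set set \<Rightarrow> nat set set \<Rightarrow> nat set set" where
  "code_prod n C D = {c \<union> (\<lambda>j. j + n) ` d | c d. c \<in> C \<and> d \<in> D}"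

end

theory Submission imports Defs begin

lemma code_of_image: "code_of n U X = (\<lambda>x. {i\<in>{1..n}. x \<in> U i}) ` X"
proof
  show "code_of n U X \<subseteq> (\<lambda>x. {i\<in>{1..n}. x \<in> U i}) ` X"
  proof
    fix s assume "s \<in> code_of n U X"
    then obtain x where s: "s \<subseteq> {1..n}" "x \<in> X" "\<forall>i\<in>s. x \<in> U i" "\<forall>j\<in>{1..n} - s. x \<notin> U j"
      unfolding code_of_def by blast
    then have "s = {i\<in>{1..n}. x \<in> U i}" by blast
    with s show "s \<in> (\<lambda>x. {i\<in>{1..n}. x \<in> U i}) ` X" by blast
  qed
next
  show "(\<lambda>x. {i\<in>{1..n}. x \<in> U i}) ` X \<subseteq> code_of n U X"
    unfolding code_of_def by blast
qed

lemma coord_cont: "continuous_map (Euclidean_space d) euclideanreal (\<lambda>z. z k)"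
  unfolding Euclidean_space_def
  by (rule continuous_map_from_subtopology) (use continuous_map_product_projection[of k UNIV "\<lambda>_. euclideanreal"] in simp)

lemma p1_cont: "continuous_map (Euclidean_space e) (Euclidean_space d) (\<lambda>z i. if i < d then z i else 0)"
  using continuous_map_componentwise_Euclidean_space[of "Euclidean_space e" d "\<lambda>z. z"] coord_cont by blast

lemma p2_cont: "continuous_map (Euclidean_space e) (Euclidean_space d) (\<lambda>z i. if i < d then z (i + k) else 0)"
  using continuous_map_componentwise_Euclidean_space[of "Euclidean_space e" d "\<lambda>z i. z (i+k)"] coord_cont by blast

lemma back_C:
  assumes "convex_realizable d (n+m) (code_prod n C D)" "D \<noteq> {}" "C \<subseteq> Pow {1..n}" "D \<subseteq> Pow {1..m}"
  shows "convex_realizable d n C"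
proof -
  obtain X U where XU: "openin (Euclidean_space d) X" "convex_fun_set X"
    "\<forall>i\<in>{1..n+m}. openin (Euclidean_space d) (U i) \<and> convex_fun_set (U i) \<and> U i \<subseteq> X"
    "code_prod n C D = code_of (n+m) U X"
    using assms(1) unfolding convex_realizable_def by blast
  have "code_of n U X = (\<lambda>s. s \<inter> {1..n}) ` code_of (n+m) U X"
    unfolding code_of_image image_image by (rule image_cong) auto
  also have "\<dots> = (\<lambda>s. s \<inter> {1..n}) ` code_prod n C D" using XU(4) by simp
  also have "\<dots> = C"
  proof
    show "(\<lambda>s. s \<inter> {1..n}) ` code_prod n C D \<subseteq> C"
    proof
      fix t assume "t \<in> (\<lambda>s. s \<inter> {1..n}) ` code_prod n C D"
      then obtain c e where ce: "c \<in> C" "e \<in> D" "t = (c \<union> (\<lambda>j. j + n) ` e) \<inter> {1..n}"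
        unfolding code_prod_def by blast
      have "e \<subseteq> {1..m}" using ce assms(4) by auto
      then have "(\<lambda>j. j + n) ` e \<inter> {1..n} = {}" by auto
      then have "t = c" using ce assms(3) by auto
      with ce show "t \<in> C" by simp
    qed
    show "C \<subseteq> (\<lambda>s. s \<inter> {1..n}) ` code_prod n C D"
    proof
      fix c assume c: "c \<in> C"
      obtain e where e: "e \<in> D" using assms(2) by blast
      have "e \<subseteq> {1..m}" using e assms(4) by auto
      then have "(\<lambda>j. j + n) ` e \<inter> {1..n} = {}" by auto
      then have "c = (c \<union> (\<lambda>j. j + n) ` e) \<inter> {1..n}" using c assms(3) by auto
      moreover have "c \<union> (\<lambda>j. j + n) ` e \<in> code_prod n C D" unfolding code_prod_def using c e by blast
      ultimately show "c \<in> (\<lambda>s. s \<inter> {1..n}) ` code_prod n C D" by blast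
    qed
  qed
  finally show ?thesis unfolding convex_realizable_def using XU(1,2,3)
    by (intro exI[of _ X] exI[of _ U]) auto
qed

lemma back_D:
  assumes "convex_realizable d (n+m) (code_prod n C D)" "C \<noteq> {}" "C \<subseteq> Pow {1..n}" "D \<subseteq> Pow {1..m}"
  shows "convex_realizable d m D"
proof -
  obtain X U where XU: "openin (Euclidean_space d) X" "convex_fun_set X"
    "\<forall>i\<in>{1..n+m}. openin (Euclidean_space d) (U i) \<and> convex_fun_set (U i) \<and> U i \<subseteq> X"
    "code_prod n C D = code_of (n+m) U X"
    using assms(1) unfolding convex_realizable_def by blast
  define g where "g s = {j\<in>{1..m}. j + n \<in> s}" for s :: "nat set"
  have "code_of m (\<lambda>j. U (j + n)) X = g ` code_of (n+m) U X"
    unfolding code_of_image image_image g_def by (rule image_cong) auto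
  also have "\<dots> = g ` code_prod n C D" using XU(4) by simp
  also have "\<dots> = D"
  proof
    show "g ` code_prod n C D \<subseteq> D"
    proof
      fix t assume "t \<in> g ` code_prod n C D"
      then obtain c e where ce: "c \<in> C" "e \<in> D" "t = g (c \<union> (\<lambda>j. j + n) ` e)"
        unfolding code_prod_def by blast
      have "c \<subseteq> {1..n}" "e \<subseteq> {1..m}" using ce assms(3,4) by auto
      then have "t = e" unfolding ce(3) g_def by force
      with ce show "t \<in> D" by simp
    qed
    show "D \<subseteq> g ` code_prod n C D"
    proof
      fix e assume e: "e \<in> D"
      obtain c where c: "c \<in> C" using assms(2) by blast
      have "c \<subseteq> {1..n}" "e \<subseteq> {1..m}" using c e assms(3,4) by auto
      then have "e = g (c \<union> (\<lambda>j. j + n) ` e)" unfolding g_def by force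
      moreover have "c \<union> (\<lambda>j. j + n) ` e \<in> code_prod n C D" unfolding code_prod_def using c e by blast
      ultimately show "e \<in> g ` code_prod n C D" by blast
    qed
  qed
  finally show ?thesis unfolding convex_realizable_def using XU(1,2,3)
    by (intro exI[of _ X] exI[of _ "\<lambda>j. U (j + n)"]) auto
qed

lemma img_shift: "(k::nat) \<in> (\<lambda>j. j + n) ` A \<longleftrightarrow> n \<le> k \<and> k - n \<in> A"
  by (auto simp: image_iff) (metis le_add_diff_inverse2)

lemma prod_open:
  assumes "openin (Euclidean_space d1) S" "openin (Euclidean_space d2) T"
  shows "openin (Euclidean_space (d1+d2)) {z\<in>topspace (Euclidean_space (d1+d2)).
     (\<lambda>i. if i < d1 then z i else 0) \<in> S \<and> (\<lambda>i. if i < d2 then z (i + d1) else 0) \<in> T}"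
proof -
  have "openin (Euclidean_space (d1+d2)) ({z\<in>topspace (Euclidean_space (d1+d2)). (\<lambda>i. if i < d1 then z i else 0) \<in> S}
     \<inter> {z\<in>topspace (Euclidean_space (d1+d2)). (\<lambda>i. if i < d2 then z (i + d1) else 0) \<in> T})"
    by (intro openin_Int openin_continuous_map_preimage[OF p1_cont assms(1)]
        openin_continuous_map_preimage[OF p2_cont assms(2)])
  moreover have "({z\<in>topspace (Euclidean_space (d1+d2)). (\<lambda>i. if i < d1 then z i else 0) \<in> S}
     \<inter> {z\<in>topspace (Euclidean_space (d1+d2)). (\<lambda>i. if i < d2 then z (i + d1) else 0) \<in> T})
     = {z\<in>topspace (Euclidean_space (d1+d2)).
     (\<lambda>i. if i < d1 then z i else 0) \<in> S \<and> (\<lambda>i. if i < d2 then z (i + d1) else 0) \<in> T}" by blast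
  ultimately show ?thesis by simp
qed

lemma prod_convex:
  assumes "convex_fun_set S" "convex_fun_set T"
  shows "convex_fun_set {z\<in>topspace (Euclidean_space (d1+d2)).
     (\<lambda>i. if i < d1 then z i else 0) \<in> S \<and> (\<lambda>i. if i < d2 then z (i + d1) else 0) \<in> T}"
  unfolding convex_fun_set_def
proof (intro ballI allI impI)
  fix x y and t :: real
  assume x: "x \<in> {z\<in>topspace (Euclidean_space (d1+d2)).
     (\<lambda>i. if i < d1 then z i else 0) \<in> S \<and> (\<lambda>i. if i < d2 then z (i + d1) else 0) \<in> T}"
    and y: "y \<in> {z\<in>topspace (Euclidean_space (d1+d2)).
     (\<lambda>i. if i < d1 then z i else 0) \<in> S \<and> (\<lambda>i. if i < d2 then z (i + d1) else 0) \<in> T}"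
    and t: "0 \<le> t \<and> t \<le> 1"
  let ?w = "\<lambda>i. (1 - t) * x i + t * y i"
  have "?w \<in> topspace (Euclidean_space (d1+d2))" using x y by (simp add: topspace_Euclidean_space)
  moreover have "(\<lambda>i. if i < d1 then ?w i else 0) = (\<lambda>i. (1 - t) * (if i < d1 then x i else 0) + t * (if i < d1 then y i else 0))"
    by auto
  moreover have "(\<lambda>i. if i < d2 then ?w (i + d1) else 0) = (\<lambda>i. (1 - t) * (if i < d2 then x (i + d1) else 0) + t * (if i < d2 then y (i + d1) else 0))"
    by auto
  moreover have "(\<lambda>i. (1 - t) * (if i < d1 then x i else 0) + t * (if i < d1 then y i else 0)) \<in> S"
  proof -
    have sx: "(\<lambda>i. if i < d1 then x i else 0) \<in> S" and sy: "(\<lambda>i. if i < d1 then y i else 0) \<in> S"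
      using x y by auto
    show ?thesis using assms(1)[unfolded convex_fun_set_def, rule_format, OF sx sy, of t] t by simp
  qed
  moreover have "(\<lambda>i. (1 - t) * (if i < d2 then x (i + d1) else 0) + t * (if i < d2 then y (i + d1) else 0)) \<in> T"
  proof -
    have sx: "(\<lambda>i. if i < d2 then x (i + d1) else 0) \<in> T" and sy: "(\<lambda>i. if i < d2 then y (i + d1) else 0) \<in> T"
      using x y by auto
    show ?thesis using assms(2)[unfolded convex_fun_set_def, rule_format, OF sx sy, of t] t by simp
  qed
  ultimately show "?w \<in> {z\<in>topspace (Euclidean_space (d1+d2)).
     (\<lambda>i. if i < d1 then z i else 0) \<in> S \<and> (\<lambda>i. if i < d2 then z (i + d1) else 0) \<in> T}" by simp
qed

lemma prod_image:
  fixes U V :: "nat \<Rightarrow> (nat\<Rightarrow>real) set" and X Y :: "(nat\<Rightarrow>real) set"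
  shows "(\<lambda>(x, y). {i \<in> {1..n}. x \<in> U i} \<union> (\<lambda>j. j + n) ` {j \<in> {1..m}. y \<in> V j}) ` (X \<times> Y)
    = {c \<union> (\<lambda>j. j + n) ` d |c d. c \<in> (\<lambda>x. {i \<in> {1..n}. x \<in> U i}) ` X \<and> d \<in> (\<lambda>x. {i \<in> {1..m}. x \<in> V i}) ` Y}"
  (is "?L = ?R")
proof (intro equalityI subsetI)
  fix s assume "s \<in> ?L"
  then obtain x y where xy: "x \<in> X" "y \<in> Y" and s: "s = {i \<in> {1..n}. x \<in> U i} \<union> (\<lambda>j. j + n) ` {j \<in> {1..m}. y \<in> V j}"
    by auto
  have "{i \<in> {1..n}. x \<in> U i} \<in> (\<lambda>x. {i \<in> {1..n}. x \<in> U i}) ` X" using xy by simp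
  moreover have "{j \<in> {1..m}. y \<in> V j} \<in> (\<lambda>x. {i \<in> {1..m}. x \<in> V i}) ` Y" using xy by simp
  ultimately show "s \<in> ?R" unfolding s by blast
next
  fix s assume "s \<in> ?R"
  then obtain c d where cd: "c \<in> (\<lambda>x. {i \<in> {1..n}. x \<in> U i}) ` X" "d \<in> (\<lambda>x. {i \<in> {1..m}. x \<in> V i}) ` Y"
     and s: "s = c \<union> (\<lambda>j. j + n) ` d" by blast
  from cd obtain x y where xy: "x \<in> X" "y \<in> Y" "c = {i \<in> {1..n}. x \<in> U i}" "d = {i \<in> {1..m}. y \<in> V i}" by blast
  have "(x, y) \<in> X \<times> Y" using xy by simp
  then show "s \<in> ?L" unfolding s xy(3,4) by (rule rev_image_eqI) simp
qed

lemma fwd: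
  assumes "convex_realizable d1 n C" "convex_realizable d2 m D"
  shows "convex_realizable (d1+d2) (n+m) (code_prod n C D)"
proof -
  obtain X U where XU: "openin (Euclidean_space d1) X" "convex_fun_set X"
    "\<forall>i\<in>{1..n}. openin (Euclidean_space d1) (U i) \<and> convex_fun_set (U i) \<and> U i \<subseteq> X"
    "C = code_of n U X"
    using assms(1) unfolding convex_realizable_def by blast
  obtain Y V where YV: "openin (Euclidean_space d2) Y" "convex_fun_set Y"
    "\<forall>i\<in>{1..m}. openin (Euclidean_space d2) (V i) \<and> convex_fun_set (V i) \<and> V i \<subseteq> Y"
    "D = code_of m V Y"
    using assms(2) unfolding convex_realizable_def by blast
  define E where "E = Euclidean_space (d1+d2)"
  define p1 where "p1 = (\<lambda>z::nat\<Rightarrow>real. \<lambda>i. if i < d1 then z i else 0)"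
  define p2 where "p2 = (\<lambda>z::nat\<Rightarrow>real. \<lambda>i. if i < d2 then z (i + d1) else 0)"
  define Z where "Z = {z\<in>topspace E. p1 z \<in> X \<and> p2 z \<in> Y}"
  define W where "W k = (if k \<le> n then {z\<in>topspace E. p1 z \<in> U k \<and> p2 z \<in> Y}
      else {z\<in>topspace E. p1 z \<in> X \<and> p2 z \<in> V (k - n)})" for k
  have Zo: "openin E Z" "convex_fun_set Z"
    unfolding Z_def E_def p1_def p2_def using XU YV by (auto intro: prod_open prod_convex)
  have Wo: "openin E (W k) \<and> convex_fun_set (W k) \<and> W k \<subseteq> Z" if k: "k \<in> {1..n+m}" for k
  proof (cases "k \<le> n")
    case True
    then have "k \<in> {1..n}" using k by auto
    then show ?thesis unfolding W_def Z_def E_def p1_def p2_def using True XU YV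
      by (auto intro: prod_open prod_convex)
  next
    case False
    then have "k - n \<in> {1..m}" using k by auto
    then show ?thesis unfolding W_def Z_def E_def p1_def p2_def using False XU YV
      by (auto intro: prod_open prod_convex)
  qed
  have sig: "{k\<in>{1..n+m}. z \<in> W k} = {i\<in>{1..n}. p1 z \<in> U i} \<union> (\<lambda>j. j + n) ` {j\<in>{1..m}. p2 z \<in> V j}"
    if z: "z \<in> Z" for z
  proof (rule set_eqI)
    fix k
    show "k \<in> {k\<in>{1..n+m}. z \<in> W k} \<longleftrightarrow> k \<in> {i\<in>{1..n}. p1 z \<in> U i} \<union> (\<lambda>j. j + n) ` {j\<in>{1..m}. p2 z \<in> V j}"
    proof (cases "k \<le> n")
      case True
      then show ?thesis using z unfolding W_def Z_def Un_iff img_shift by auto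
    next
      case False
      then have "k = (k - n) + n" by simp
      then show ?thesis using z False unfolding W_def Z_def Un_iff img_shift by auto
    qed
  qed
  have surj: "(\<lambda>z. (p1 z, p2 z)) ` Z = X \<times> Y"
  proof
    show "(\<lambda>z. (p1 z, p2 z)) ` Z \<subseteq> X \<times> Y" unfolding Z_def by blast
    show "X \<times> Y \<subseteq> (\<lambda>z. (p1 z, p2 z)) ` Z"
    proof clarify
      fix x y assume xy: "x \<in> X" "y \<in> Y"
      have "x \<in> topspace (Euclidean_space d1)" using openin_subset[OF XU(1)] xy(1) by blast
      then have x0: "\<forall>i\<ge>d1. x i = 0" by (simp add: topspace_Euclidean_space)
      have "y \<in> topspace (Euclidean_space d2)" using openin_subset[OF YV(1)] xy(2) by blast
      then have y0: "\<forall>i\<ge>d2. y i = 0" by (simp add: topspace_Euclidean_space)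
      define w where "w = (\<lambda>i. if i < d1 then x i else y (i - d1))"
      have "p1 w = x" unfolding p1_def w_def
      proof (rule ext)
        fix i show "(if i < d1 then if i < d1 then x i else y (i - d1) else 0) = x i"
          using x0 by (cases "i < d1") auto
      qed
      moreover have "p2 w = y" unfolding p2_def w_def
      proof (rule ext)
        fix i show "(if i < d2 then if i + d1 < d1 then x (i + d1) else y (i + d1 - d1) else 0) = y i"
          using y0 by (cases "i < d2") auto
      qed
      moreover have "w \<in> topspace E" unfolding E_def topspace_Euclidean_space
      proof (intro CollectI allI impI)
        fix i assume "d1 + d2 \<le> i"
        then show "w i = 0" unfolding w_def using y0 by auto
      qed
      ultimately have wZ: "w \<in> Z" and eq: "(x, y) = (p1 w, p2 w)" unfolding Z_def using xy by auto
      show "(x, y) \<in> (\<lambda>z. (p1 z, p2 z)) ` Z" by (rule image_eqI[where f="\<lambda>z. (p1 z, p2 z)", OF eq wZ])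
    qed
  qed
  have "code_of (n+m) W Z = (\<lambda>z. {i\<in>{1..n}. p1 z \<in> U i} \<union> (\<lambda>j. j + n) ` {j\<in>{1..m}. p2 z \<in> V j}) ` Z"
    unfolding code_of_image using sig by (rule image_cong[OF refl])
  also have "\<dots> = (\<lambda>(x,y). {i\<in>{1..n}. x \<in> U i} \<union> (\<lambda>j. j + n) ` {j\<in>{1..m}. y \<in> V j}) ` ((\<lambda>z. (p1 z, p2 z)) ` Z)"
    by (simp add: image_image)
  also have "\<dots> = code_prod n C D"
    unfolding surj XU(4) YV(4) code_of_image code_prod_def by (rule prod_image)
  finally show ?thesis unfolding convex_realizable_def using Zo Wo
    by (intro exI[of _ Z] exI[of _ W]) (auto simp: E_def)
qed

theorem theorem4p3:
  fixes n m :: nat and C D :: "nat set set"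
  assumes "C \<subseteq> Pow {1..n}" and "D \<subseteq> Pow {1..m}"
    and "C \<noteq> {}" and "D \<noteq> {}"
  shows "(convex_code n C \<and> convex_code m D \<longleftrightarrow> convex_code (n + m) (code_prod n C D))
         \<and> (convex_code n C \<and> convex_code m D \<longrightarrow>
              mindim (n + m) (code_prod n C D) \<le> mindim n C + mindim m D)"
proof (rule conjI[OF iffI impI])
  assume "convex_code n C \<and> convex_code m D"
  then obtain d1 d2 where "convex_realizable d1 n C" "convex_realizable d2 m D"
    unfolding convex_code_def by blast
  then show "convex_code (n + m) (code_prod n C D)" unfolding convex_code_def using fwd by blast
next
  assume "convex_code (n + m) (code_prod n C D)"
  then obtain d where d: "convex_realizable d (n+m) (code_prod n C D)" unfolding convex_code_def by blast
  show "convex_code n C \<and> convex_code m D" unfolding convex_code_def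
    using back_C[OF d assms(4,1,2)] back_D[OF d assms(3,1,2)] by blast
next
  assume "convex_code n C \<and> convex_code m D"
  then have "\<exists>d. convex_realizable d n C" "\<exists>d. convex_realizable d m D" unfolding convex_code_def by auto
  then have "convex_realizable (mindim n C) n C" "convex_realizable (mindim m D) m D"
    unfolding mindim_def by (auto intro: LeastI_ex)
  then have "convex_realizable (mindim n C + mindim m D) (n+m) (code_prod n C D)" by (rule fwd)
  then show "mindim (n + m) (code_prod n C D) \<le> mindim n C + mindim m D"
    unfolding mindim_def[of "n+m"] by (rule Least_le)
qed

end
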